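(* Let $F(z,\zeta,\bar z,\bar\zeta)$ be real-analytic near $0$ with $F_{z\bar z}\neq0$ and $F_{z\bar z}F_{\zeta\bar\zeta}-F_{\zeta\bar z}F_{z\bar\zeta}\equiv0$. For every multiindex $(a,b,c,d)\in\mathbb{N}^4$ with $b\geq1$ and $d\geq1$, setting $n:=a+b+c+d$, there exist a polynomial $P_{a,b,c,d}$ (not depending on $F$) and an integer $N_{a,b,c,d}\geq1$ such that $$F_{z^a\zeta^b\bar z^c\bar\zeta^d}\equiv\frac{1}{(F_{z\bar z})^{N_{a,b,c,d}}}\,P_{a,b,c,d}\Big(\{F_{z^{a'}\bar z^{c'}}\}_{a'+c'\leq n},\ \{F_{z^{a'}\zeta^{b'}\bar z^{c'}}\}_{a'+b'+c'\leq n},\ \{F_{z^{a'}\bar z^{c'}\bar\zeta^{d'}}\}_{a'+c'+d'\leq n}\Big).$$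
   Context: Subscripts denote partial derivatives, e.g. $F_{z^a\zeta^b\bar z^c\bar\zeta^d}=\partial_z^a\partial_\zeta^b\partial_{\bar z}^c\partial_{\bar\zeta}^dF$. *)

theory Defs
  imports "HOL-Analysis.Analysis"
begin

text \<open>A function of the four independent complex variables z, zeta, zbar, zetabar
  (the complexification of a real-analytic function of z, zeta).\<close>
type_synonym fun4 = "complex \<Rightarrow> complex \<Rightarrow> complex \<Rightarrow> complex \<Rightarrow> complex"

text \<open>Holomorphic in the four variables on U (Osgood: continuous and separately holomorphic).\<close>
definition holo4 :: "fun4 \<Rightarrow> (complex \<times> complex \<times> complex \<times> complex) set \<Rightarrow> bool" where
  "holo4 F U \<longleftrightarrow> open U \<and> continuous_on U (\<lambda>(z,s,w,t). F z s w t) \<and>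
     (\<forall>(z,s,w,t)\<in>U. (\<lambda>x. F x s w t) field_differentiable at z \<and>
                     (\<lambda>x. F z x w t) field_differentiable at s \<and>
                     (\<lambda>x. F z s x t) field_differentiable at w \<and>
                     (\<lambda>x. F z s w x) field_differentiable at t)"

definition dz :: "fun4 \<Rightarrow> fun4" where "dz F = (\<lambda>z s w t. deriv (\<lambda>x. F x s w t) z)"
definition dzeta :: "fun4 \<Rightarrow> fun4" where "dzeta F = (\<lambda>z s w t. deriv (\<lambda>x. F z x w t) s)"
definition dzbar :: "fun4 \<Rightarrow> fun4" where "dzbar F = (\<lambda>z s w t. deriv (\<lambda>x. F z s x t) w)"
definition dzetabar :: "fun4 \<Rightarrow> fun4" where "dzetabar F = (\<lambda>z s w t. deriv (\<lambda>x. F z s w x) t)"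

definition pd :: "nat \<Rightarrow> nat \<Rightarrow> nat \<Rightarrow> nat \<Rightarrow> fun4 \<Rightarrow> fun4" where
  "pd a b c d F = (dz ^^ a) ((dzeta ^^ b) ((dzbar ^^ c) ((dzetabar ^^ d) F)))"

text \<open>Variables of the universal polynomial: VA a c stands for F_{z^a zbar^c},
  VB a b c for F_{z^a zeta^b zbar^c}, VC a c d for F_{z^a zbar^c zetabar^d}.\<close>
datatype dvar = VA nat nat | VB nat nat nat | VC nat nat nat

datatype pexpr = PConst complex | PVar dvar | PAdd pexpr pexpr | PMul pexpr pexpr

fun peval :: "(dvar \<Rightarrow> complex) \<Rightarrow> pexpr \<Rightarrow> complex" where
  "peval v (PConst c) = c"
| "peval v (PVar x) = v x"
| "peval v (PAdd p q) = peval v p + peval v q"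
| "peval v (PMul p q) = peval v p * peval v q"

fun pvars :: "pexpr \<Rightarrow> dvar set" where
  "pvars (PConst c) = {}"
| "pvars (PVar x) = {x}"
| "pvars (PAdd p q) = pvars p \<union> pvars q"
| "pvars (PMul p q) = pvars p \<union> pvars q"

definition allowed_vars :: "nat \<Rightarrow> dvar set" where
  "allowed_vars n = {VA a c | a c. a + c \<le> n} \<union> {VB a b c | a b c. a + b + c \<le> n}
                    \<union> {VC a c d | a c d. a + c + d \<le> n}"

fun jet :: "fun4 \<Rightarrow> complex \<Rightarrow> complex \<Rightarrow> complex \<Rightarrow> complex \<Rightarrow> dvar \<Rightarrow> complex" where
  "jet F z s w t (VA a c) = pd a 0 c 0 F z s w t"
| "jet F z s w t (VB a b c) = pd a b c 0 F z s w t"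
| "jet F z s w t (VC a c d) = pd a 0 c d F z s w t"

end

theory Submission
  imports Defs "HOL-Complex_Analysis.Complex_Analysis"
begin


lemma param_circle_cont:
  fixes g :: "'p::metric_space \<Rightarrow> complex \<Rightarrow> complex"
  assumes K: "compact K" and r: "0 < r"
    and cont: "continuous_on (K \<times> sphere z r) (\<lambda>(p,\<xi>). g p \<xi>)"
  shows "continuous_on K (\<lambda>p. contour_integral (circlepath z r) (g p))"
  unfolding continuous_on_def
proof (intro ballI)
  fix p0 assume p0: "p0 \<in> K"
  show "((\<lambda>p. contour_integral (circlepath z r) (g p)) \<longlongrightarrow> contour_integral (circlepath z r) (g p0)) (at p0 within K)"
  proof (cases "trivial_limit (at p0 within K)")
    case True then show ?thesis by simp
  next
    case False
    have uc: "uniformly_continuous_on (K \<times> sphere z r) (\<lambda>(p,\<xi>). g p \<xi>)"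
      by (rule compact_uniformly_continuous[OF cont]) (simp add: compact_Times K)
    have ul: "uniform_limit (sphere z r) g (g p0) (at p0 within K)"
      unfolding uniform_limit_iff
    proof (intro allI impI)
      fix e::real assume e: "0 < e"
      obtain d where d: "d>0" and dd: "\<And>x x'. x \<in> K \<times> sphere z r \<Longrightarrow> x' \<in> K \<times> sphere z r \<Longrightarrow> dist x' x < d \<Longrightarrow> dist ((\<lambda>(p,\<xi>). g p \<xi>) x') ((\<lambda>(p,\<xi>). g p \<xi>) x) < e"
        using uc e unfolding uniformly_continuous_on_def by metis
      have H: "\<forall>p\<in>K. p \<noteq> p0 \<and> dist p p0 < d \<longrightarrow> (\<forall>\<xi>\<in>sphere z r. dist (g p \<xi>) (g p0 \<xi>) < e)"
      proof (intro ballI impI)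
        fix p \<xi> assume "p \<in> K" "p \<noteq> p0 \<and> dist p p0 < d" "\<xi> \<in> sphere z r"
        then show "dist (g p \<xi>) (g p0 \<xi>) < e"
        proof -
          have "dist (p,\<xi>) (p0,\<xi>) = dist p p0" by (simp add: dist_Pair_Pair)
          then have "dist (p,\<xi>) (p0,\<xi>) < d" using \<open>p \<noteq> p0 \<and> dist p p0 < d\<close> by simp
          moreover have "(p0,\<xi>) \<in> K \<times> sphere z r" "(p,\<xi>) \<in> K \<times> sphere z r"
            using p0 \<open>p \<in> K\<close> \<open>\<xi> \<in> sphere z r\<close> by auto
          ultimately show ?thesis using dd by fastforce
        qed
      qed
      show "\<forall>\<^sub>F p in at p0 within K. \<forall>\<xi>\<in>sphere z r. dist (g p \<xi>) (g p0 \<xi>) < e"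
        unfolding eventually_at by (rule exI[of _ d], rule conjI[OF d H])
    qed
    have int: "g p contour_integrable_on circlepath z r" if "p \<in> K" for p
    proof (rule contour_integrable_continuous_circlepath)
      have "continuous_on (sphere z r) (\<lambda>\<xi>. (\<lambda>(p,\<xi>). g p \<xi>) (p,\<xi>))"
        by (rule continuous_on_compose2[OF cont]) (use that in \<open>auto intro!: continuous_intros\<close>)
      then show "continuous_on (path_image (circlepath z r)) (g p)"
        using r by (simp add: path_image_circlepath_nonneg)
    qed
    have ev: "\<forall>\<^sub>F p in at p0 within K. g p contour_integrable_on circlepath z r"
      unfolding eventually_at by (rule exI[of _ 1]) (auto intro: int)
    show ?thesis using contour_integral_uniform_limit_circlepath(2)[OF ev ul False r] .
  qed
qed


lemma GC:
  fixes f :: "complex \<Rightarrow> 'a::heine_borel \<Rightarrow> complex"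
  assumes V: "open V" and cont: "continuous_on V (\<lambda>(x,q). f x q)"
    and hol: "\<And>x q. (x,q) \<in> V \<Longrightarrow> (\<lambda>x. f x q) field_differentiable at x"
  shows "continuous_on V (\<lambda>(x,q). deriv (\<lambda>x. f x q) x)"
proof (rule continuous_at_imp_continuous_on, rule ballI)
  fix p0 assume p0: "p0 \<in> V"
  obtain x0 q0 where p0eq: "p0 = (x0,q0)" by fastforce
  obtain e where e: "e > 0" "ball p0 e \<subseteq> V" using V p0 open_contains_ball by blast
  define r where "r = e/3"
  have r: "r > 0" using e by (simp add: r_def)
  have sub: "(x,q) \<in> V" if "dist x x0 \<le> r" "dist q q0 \<le> r" for x q
  proof -
    have "dist (x,q) p0 = sqrt ((dist x x0)\<^sup>2 + (dist q q0)\<^sup>2)" by (simp add: p0eq dist_Pair_Pair)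
    also have "\<dots> \<le> dist x x0 + dist q q0" by (rule sqrt_sum_squares_le_sum) auto
    also have "\<dots> < e" using that e by (simp add: r_def)
    finally show ?thesis using e by (auto simp: dist_commute)
  qed
  define c where "c = 1 / (2 * of_real pi * \<i>)"
  define K where "K = cball x0 (r/2) \<times> cball q0 r"
  define h where "h = (\<lambda>p. c * contour_integral (circlepath x0 r) (\<lambda>\<xi>. f \<xi> (snd p) / (\<xi> - fst p)^2))"
  have Deq: "deriv (\<lambda>x. f x (snd p)) (fst p) = h p" if "p \<in> K" for p
  proof -
    obtain x q where peq: "p = (x,q)" by fastforce
    have xq: "dist x0 x \<le> r/2" "dist q0 q \<le> r" using that by (auto simp: K_def peq)
    have im: "(\<lambda>x. (x,q)) ` cball x0 r \<subseteq> V"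
    proof (rule image_subsetI)
      fix x assume "x \<in> cball x0 r"
      then show "(x,q) \<in> V" by (intro sub) (auto simp: dist_commute xq)
    qed
    have "continuous_on (cball x0 r) ((\<lambda>(x,q). f x q) \<circ> (\<lambda>x. (x,q)))"
      by (rule continuous_on_compose[OF _ continuous_on_subset[OF cont im]]) (intro continuous_intros)
    then have cf: "continuous_on (cball x0 r) (\<lambda>x. f x q)" by (simp add: o_def)
    have hf: "(\<lambda>x. f x q) holomorphic_on ball x0 r"
      unfolding holomorphic_on_def
    proof
      fix x assume "x \<in> ball x0 r"
      then have "(x,q) \<in> V" by (intro sub) (auto simp: dist_commute xq)
      then show "(\<lambda>x. f x q) field_differentiable at x within ball x0 r"
        by (rule field_differentiable_at_within[OF hol])
    qed
    have xin: "x \<in> ball x0 r" using xq r by auto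
    have D: "((\<lambda>x. f x q) has_field_derivative (c * contour_integral (circlepath x0 r) (\<lambda>u. f u q/(u-x)^2))) (at x)"
      using Cauchy_derivative_integral_circlepath(2)[OF cf hf xin] by (simp add: c_def)
    show ?thesis unfolding peq h_def using DERIV_imp_deriv[OF D] by simp
  qed
  have hcont: "continuous_on K h"
    unfolding h_def
  proof (intro continuous_on_mult_left param_circle_cont)
    show "compact K" by (simp add: K_def compact_Times)
    show "0 < r" by (rule r)
    have im: "(\<lambda>z. (snd z, snd (fst z))) ` (K \<times> sphere x0 r) \<subseteq> V"
    proof (rule image_subsetI)
      fix z assume "z \<in> K \<times> sphere x0 r"
      then have "dist x0 (snd z) = r" "dist q0 (snd (fst z)) \<le> r"
        unfolding K_def by (auto simp: mem_Times_iff)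
      then show "(snd z, snd (fst z)) \<in> V" by (intro sub) (auto simp: dist_commute)
    qed
    have "continuous_on (K \<times> sphere x0 r) ((\<lambda>(x,q). f x q) \<circ> (\<lambda>z. (snd z, snd (fst z))))"
      by (rule continuous_on_compose[OF _ continuous_on_subset[OF cont im]]) (intro continuous_intros)
    then have 1: "continuous_on (K \<times> sphere x0 r) (\<lambda>z. f (snd z) (snd (fst z)))" by (simp add: o_def)
    have 2: "(snd z - fst (fst z))^2 \<noteq> 0" if "z \<in> K \<times> sphere x0 r" for z
    proof
      assume "(snd z - fst (fst z))^2 = 0"
      then have "snd z = fst (fst z)" by simp
      moreover have "dist x0 (fst (fst z)) \<le> r/2" "dist x0 (snd z) = r"
        using that unfolding K_def by (auto simp: mem_Times_iff)
      ultimately show False using r by simp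
    qed
    have 3: "continuous_on (K \<times> sphere x0 r) (\<lambda>z. (snd z - fst (fst z))^2)"
      by (intro continuous_intros)
    have 4: "\<forall>z\<in>K \<times> sphere x0 r. (snd z - fst (fst z))^2 \<noteq> 0" by (rule ballI) (rule 2)
    have "continuous_on (K \<times> sphere x0 r) (\<lambda>z. f (snd z) (snd (fst z)) / (snd z - fst (fst z))^2)"
      using continuous_on_divide[OF 1 3 4] .
    then show "continuous_on (K \<times> sphere x0 r) (\<lambda>(p, \<xi>). f \<xi> (snd p) / (\<xi> - fst p)\<^sup>2)"
      by (simp add: case_prod_unfold)
  qed
  have bK: "ball p0 (r/2) \<subseteq> K"
  proof
    fix p assume "p \<in> ball p0 (r/2)"
    then have "dist p0 p < r/2" by simp
    moreover have "dist (fst p0) (fst p) \<le> dist p0 p" "dist (snd p0) (snd p) \<le> dist p0 p"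
      by (rule dist_fst_le, rule dist_snd_le)
    ultimately show "p \<in> K" using r by (cases p) (auto simp: K_def p0eq)
  qed
  have "continuous_on (ball p0 (r/2)) (\<lambda>(x,q). deriv (\<lambda>x. f x q) x)"
  proof (rule continuous_on_eq[OF continuous_on_subset[OF hcont bK]])
    fix p assume "p \<in> ball p0 (r/2)"
    then show "h p = (\<lambda>(x,q). deriv (\<lambda>x. f x q) x) p" using Deq bK by (auto simp: case_prod_unfold)
  qed
  then show "isCont (\<lambda>(x,q). deriv (\<lambda>x. f x q) x) p0"
    by (rule continuous_on_interior) (simp add: r)
qed


definition cpi :: complex where "cpi = 2 * of_real pi * \<i>"

lemma cpi_nz: "cpi \<noteq> 0" by (simp add: cpi_def)

lemma cint_rmul: "contour_integral g (\<lambda>x. f x * c) = contour_integral g f * c"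
proof (cases "c = 0")
  case True then show ?thesis by simp
next
  case False
  show ?thesis
  proof (cases "f contour_integrable_on g")
    case True then show ?thesis by (rule contour_integral_rmul)
  next
    case nf: False
    then have "\<not> (\<lambda>x. f x * c) contour_integrable_on g" using contour_integrable_rmul_iff[OF False] by simp
    then show ?thesis using nf by (simp add: not_integrable_contour_integral)
  qed
qed

lemma comp2:
  assumes cont: "continuous_on T (\<lambda>(x,y). f x y)"
    and a: "continuous_on S a" and b: "continuous_on S b"
    and ab: "\<And>z. z \<in> S \<Longrightarrow> (a z, b z) \<in> T"
  shows "continuous_on S (\<lambda>z. f (a z) (b z))"
proof -
  have "continuous_on S (\<lambda>z. (a z, b z))" by (rule continuous_on_Pair[OF a b])
  moreover have "(\<lambda>z. (a z, b z)) ` S \<subseteq> T" using ab by auto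
  ultimately have "continuous_on S (\<lambda>z. (\<lambda>(x,y). f x y) (a z, b z))"
    by (rule continuous_on_compose2[OF cont])
  then show ?thesis by simp
qed

lemma vd_circ: "continuous_on {0..1} (\<lambda>t. vector_derivative (circlepath z r) (at t))"
  unfolding vector_derivative_circlepath by (intro continuous_intros)

lemma KEY0:
  fixes f :: "complex \<Rightarrow> complex \<Rightarrow> complex"
  assumes r: "0 < r"
    and cont: "continuous_on (cball x0 r \<times> cball y0 r) (\<lambda>(x,y). f x y)"
    and hx: "\<And>y. y \<in> cball y0 r \<Longrightarrow> (\<lambda>x. f x y) holomorphic_on ball x0 r"
    and hy: "\<And>x. x \<in> cball x0 r \<Longrightarrow> (\<lambda>y. f x y) holomorphic_on ball y0 r"
  shows "((\<lambda>y. deriv (\<lambda>x. f x y) x0) has_field_derivative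
     contour_integral (circlepath y0 r) (\<lambda>\<eta>. contour_integral (circlepath x0 r) (\<lambda>\<xi>. f \<xi> \<eta> / (\<xi> - x0)^2) / cpi / (\<eta> - y0)^2) / cpi) (at y0)"
proof -
  let ?C1 = "circlepath x0 r" and ?C2 = "circlepath y0 r"
  have pi1: "path_image ?C1 = sphere x0 r" and pi2: "path_image ?C2 = sphere y0 r" using r by auto
  have cx: "continuous_on (cball x0 r) (\<lambda>x. f x y)" if "y \<in> cball y0 r" for y
    by (rule comp2[OF cont]) (use that in \<open>auto intro!: continuous_intros\<close>)
  have cy: "continuous_on (cball y0 r) (\<lambda>y. f x y)" if "x \<in> cball x0 r" for x
    by (rule comp2[OF cont]) (use that in \<open>auto intro!: continuous_intros\<close>)
  define A where "A = (\<lambda>\<eta>. deriv (\<lambda>x. f x \<eta>) x0)"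
  have x0b: "x0 \<in> ball x0 r" using r by simp
  have Aeq: "A \<eta> = contour_integral ?C1 (\<lambda>\<xi>. f \<xi> \<eta> / (\<xi> - x0)^2) / cpi" if "\<eta> \<in> cball y0 r" for \<eta>
  proof -
    have "((\<lambda>x. f x \<eta>) has_field_derivative (1 / (2 * of_real pi * \<i>) * contour_integral ?C1 (\<lambda>u. f u \<eta> / (u - x0)^2))) (at x0)"
      by (rule Cauchy_derivative_integral_circlepath(2)[OF cx[OF that] hx[OF that] x0b])
    from DERIV_imp_deriv[OF this] show ?thesis by (simp add: A_def cpi_def)
  qed
  have J1: "continuous_on (cball y0 r \<times> sphere x0 r) (\<lambda>(\<eta>,\<xi>). f \<xi> \<eta> / (\<xi> - x0)^2)"
  proof -
    have 1: "continuous_on (cball y0 r \<times> sphere x0 r) (\<lambda>z. f (snd z) (fst z))"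
      by (rule comp2[OF cont]) (auto intro!: continuous_intros)
    have 2: "continuous_on (cball y0 r \<times> sphere x0 r) (\<lambda>z. (snd z - x0)^2)"
      by (intro continuous_intros)
    have 3: "\<forall>z\<in>cball y0 r \<times> sphere x0 r. (snd z - x0)^2 \<noteq> 0" using r by auto
    show ?thesis using continuous_on_divide[OF 1 2 3] by (simp add: case_prod_unfold)
  qed
  have Acont: "continuous_on (cball y0 r) A"
  proof -
    have "continuous_on (cball y0 r) (\<lambda>\<eta>. contour_integral ?C1 (\<lambda>\<xi>. f \<xi> \<eta> / (\<xi> - x0)^2))"
      by (rule param_circle_cont[OF compact_cball r J1])
    then have "continuous_on (cball y0 r) (\<lambda>\<eta>. contour_integral ?C1 (\<lambda>\<xi>. f \<xi> \<eta> / (\<xi> - x0)^2) / cpi)"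
      using continuous_on_divide[OF _ continuous_on_const, of _ _ cpi] cpi_nz by blast
    then show ?thesis by (rule continuous_on_eq) (simp add: Aeq)
  qed
  have CI: "((\<lambda>\<eta>. A \<eta> / (\<eta> - y)^1) has_contour_integral (cpi * A y)) ?C2" if y: "y \<in> ball y0 r" for y
  proof -
    define \<Phi> where "\<Phi> = (\<lambda>\<xi> \<eta>. f \<xi> \<eta> / (\<xi> - x0)^2 * inverse (\<eta> - y))"
    have \<Phi>c: "continuous_on (path_image ?C1 \<times> path_image ?C2) (\<lambda>(\<xi>,\<eta>). \<Phi> \<xi> \<eta>)"
    proof -
      have 1: "continuous_on (sphere x0 r \<times> sphere y0 r) (\<lambda>z. f (fst z) (snd z))"
        by (rule comp2[OF cont]) (auto intro!: continuous_intros)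
      have 2: "continuous_on (sphere x0 r \<times> sphere y0 r) (\<lambda>z. (fst z - x0)^2)"
        by (intro continuous_intros)
      have 3: "\<forall>z\<in>sphere x0 r \<times> sphere y0 r. (fst z - x0)^2 \<noteq> 0" using r by auto
      have 4: "continuous_on (sphere x0 r \<times> sphere y0 r) (\<lambda>z. snd z - y)"
        by (intro continuous_intros)
      have 5: "\<forall>z\<in>sphere x0 r \<times> sphere y0 r. snd z - y \<noteq> 0" using y by auto
      have "continuous_on (sphere x0 r \<times> sphere y0 r) (\<lambda>z. f (fst z) (snd z) / (fst z - x0)^2 * inverse (snd z - y))"
        using continuous_on_mult[OF continuous_on_divide[OF 1 2 3] continuous_on_inverse[OF 4 5]] .
      then show ?thesis unfolding pi1 pi2 by (simp add: case_prod_unfold \<Phi>_def)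
    qed
    have swap: "contour_integral ?C1 (\<lambda>\<xi>. contour_integral ?C2 (\<Phi> \<xi>)) = contour_integral ?C2 (\<lambda>\<eta>. contour_integral ?C1 (\<lambda>\<xi>. \<Phi> \<xi> \<eta>))"
      by (rule contour_integral_swap[OF \<Phi>c valid_path_circlepath valid_path_circlepath vd_circ vd_circ])
    have yc: "y \<in> cball y0 r" using y by simp
    have L: "contour_integral ?C1 (\<lambda>\<xi>. contour_integral ?C2 (\<Phi> \<xi>)) = cpi * A y * cpi"
    proof -
      have "contour_integral ?C2 (\<Phi> \<xi>) = f \<xi> y / (\<xi> - x0)^2 * cpi" if "\<xi> \<in> path_image ?C1" for \<xi>
      proof -
        have \<xi>: "\<xi> \<in> cball x0 r" using that pi1 by auto
        have PhiE: "\<Phi> \<xi> = (\<lambda>\<eta>. f \<xi> \<eta> / (\<eta> - y) * inverse ((\<xi> - x0)^2))"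
          by (simp add: \<Phi>_def divide_inverse mult_ac)
        have "contour_integral ?C2 (\<Phi> \<xi>) = contour_integral ?C2 (\<lambda>\<eta>. f \<xi> \<eta> / (\<eta> - y)) * inverse ((\<xi> - x0)^2)"
          unfolding PhiE by (rule cint_rmul)
        also have "contour_integral ?C2 (\<lambda>\<eta>. f \<xi> \<eta> / (\<eta> - y)) = 2 * of_real pi * \<i> * f \<xi> y"
          by (rule contour_integral_unique[OF Cauchy_integral_circlepath[OF cy[OF \<xi>] hy[OF \<xi>]]])
             (use y in \<open>simp add: dist_norm norm_minus_commute\<close>)
        finally show ?thesis by (simp add: cpi_def divide_inverse mult_ac)
      qed
      then have "contour_integral ?C1 (\<lambda>\<xi>. contour_integral ?C2 (\<Phi> \<xi>)) = contour_integral ?C1 (\<lambda>\<xi>. f \<xi> y / (\<xi> - x0)^2 * cpi)"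
        by (rule contour_integral_eq)
      also have "\<dots> = contour_integral ?C1 (\<lambda>\<xi>. f \<xi> y / (\<xi> - x0)^2) * cpi" by (rule cint_rmul)
      also have "contour_integral ?C1 (\<lambda>\<xi>. f \<xi> y / (\<xi> - x0)^2) = cpi * A y"
        using Aeq[OF yc] cpi_nz by simp
      finally show ?thesis .
    qed
    have R: "contour_integral ?C2 (\<lambda>\<eta>. contour_integral ?C1 (\<lambda>\<xi>. \<Phi> \<xi> \<eta>)) = contour_integral ?C2 (\<lambda>\<eta>. A \<eta> / (\<eta> - y)^1) * cpi"
    proof -
      have "contour_integral ?C1 (\<lambda>\<xi>. \<Phi> \<xi> \<eta>) = A \<eta> / (\<eta> - y)^1 * cpi" if "\<eta> \<in> path_image ?C2" for \<eta>
      proof -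
        have \<eta>: "\<eta> \<in> cball y0 r" using that pi2 by auto
        have "contour_integral ?C1 (\<lambda>\<xi>. \<Phi> \<xi> \<eta>) = contour_integral ?C1 (\<lambda>\<xi>. f \<xi> \<eta> / (\<xi> - x0)^2) * inverse (\<eta> - y)"
          unfolding \<Phi>_def by (rule cint_rmul)
        also have "contour_integral ?C1 (\<lambda>\<xi>. f \<xi> \<eta> / (\<xi> - x0)^2) = cpi * A \<eta>"
          using Aeq[OF \<eta>] cpi_nz by simp
        finally show ?thesis by (simp add: divide_inverse mult_ac)
      qed
      then have "contour_integral ?C2 (\<lambda>\<eta>. contour_integral ?C1 (\<lambda>\<xi>. \<Phi> \<xi> \<eta>)) = contour_integral ?C2 (\<lambda>\<eta>. A \<eta> / (\<eta> - y)^1 * cpi)"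
        by (rule contour_integral_eq)
      also have "\<dots> = contour_integral ?C2 (\<lambda>\<eta>. A \<eta> / (\<eta> - y)^1) * cpi" by (rule cint_rmul)
      finally show ?thesis .
    qed
    have val: "contour_integral ?C2 (\<lambda>\<eta>. A \<eta> / (\<eta> - y)^1) = cpi * A y"
      using swap L R cpi_nz by simp
    have "continuous_on (sphere y0 r) (\<lambda>\<eta>. A \<eta> / (\<eta> - y)^1)"
    proof -
      have 1: "continuous_on (sphere y0 r) A" by (rule continuous_on_subset[OF Acont]) auto
      have 2: "continuous_on (sphere y0 r) (\<lambda>\<eta>. (\<eta> - y)^1)" by (intro continuous_intros)
      have 3: "\<forall>\<eta>\<in>sphere y0 r. (\<eta> - y)^1 \<noteq> 0" using y by auto
      show ?thesis using continuous_on_divide[OF 1 2 3] .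
    qed
    then have "(\<lambda>\<eta>. A \<eta> / (\<eta> - y)^1) contour_integrable_on ?C2"
      by (intro contour_integrable_continuous_circlepath) (simp add: abs_of_pos[OF r])
    from has_contour_integral_integral[OF this] show ?thesis unfolding val .
  qed
  have Asph: "continuous_on (path_image ?C2) A"
    by (rule continuous_on_subset[OF Acont]) (use r in \<open>auto simp: pi2\<close>)
  have y0b: "y0 \<in> ball y0 r" using r by simp
  have "((\<lambda>w. cpi * A w) has_field_derivative (of_nat 1 * contour_integral ?C2 (\<lambda>u. A u / (u - y0)^(Suc 1)))) (at y0)"
    by (rule Cauchy_next_derivative_circlepath(2)[OF Asph CI _ y0b]) simp_all
  from DERIV_cdivide[OF this, of cpi]
  have "(A has_field_derivative contour_integral ?C2 (\<lambda>u. A u / (u - y0)^2) / cpi) (at y0)"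
    using cpi_nz by (simp add: numeral_2_eq_2)
  moreover have "contour_integral ?C2 (\<lambda>u. A u / (u - y0)^2) =
     contour_integral ?C2 (\<lambda>\<eta>. contour_integral ?C1 (\<lambda>\<xi>. f \<xi> \<eta> / (\<xi> - x0)^2) / cpi / (\<eta> - y0)^2)"
    by (rule contour_integral_eq) (use r in \<open>auto simp: Aeq abs_of_pos\<close>)
  ultimately show ?thesis by (simp add: A_def)
qed


lemma KEY:
  fixes f :: "complex \<Rightarrow> complex \<Rightarrow> complex"
  assumes V: "open V" and cont: "continuous_on V (\<lambda>(x,y). f x y)"
    and dx: "\<And>x y. (x,y) \<in> V \<Longrightarrow> (\<lambda>x. f x y) field_differentiable at x"
    and dy: "\<And>x y. (x,y) \<in> V \<Longrightarrow> (\<lambda>y. f x y) field_differentiable at y"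
    and p: "(x0,y0) \<in> V"
  shows "((\<lambda>y. deriv (\<lambda>x. f x y) x0) has_field_derivative deriv (\<lambda>x. deriv (\<lambda>y. f x y) y0) x0) (at y0)"
proof -
  obtain e where e: "e > 0" "ball (x0,y0) e \<subseteq> V" using V p open_contains_ball by blast
  define r where "r = e/3"
  have r: "r > 0" using e by (simp add: r_def)
  have sub: "(x,y) \<in> V" if "dist x0 x \<le> r" "dist y0 y \<le> r" for x y
  proof -
    have "dist (x,y) (x0,y0) = sqrt ((dist x x0)\<^sup>2 + (dist y y0)\<^sup>2)" by (simp add: dist_Pair_Pair)
    also have "\<dots> \<le> dist x x0 + dist y y0" by (rule sqrt_sum_squares_le_sum) auto
    also have "\<dots> < e" using that e by (simp add: r_def dist_commute)
    finally show ?thesis using e by (auto simp: dist_commute)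
  qed
  have cont': "continuous_on (cball x0 r \<times> cball y0 r) (\<lambda>(x,y). f x y)"
    by (rule continuous_on_subset[OF cont]) (auto intro: sub)
  have hx: "(\<lambda>x. f x y) holomorphic_on ball x0 r" if "y \<in> cball y0 r" for y
    unfolding holomorphic_on_def
  proof
    fix x assume "x \<in> ball x0 r"
    then have "(x,y) \<in> V" using that by (intro sub) auto
    then show "(\<lambda>x. f x y) field_differentiable at x within ball x0 r"
      by (rule field_differentiable_at_within[OF dx])
  qed
  have hy: "(\<lambda>y. f x y) holomorphic_on ball y0 r" if "x \<in> cball x0 r" for x
    unfolding holomorphic_on_def
  proof
    fix y assume "y \<in> ball y0 r"
    then have "(x,y) \<in> V" using that by (intro sub) auto
    then show "(\<lambda>y. f x y) field_differentiable at y within ball y0 r"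
      by (rule field_differentiable_at_within[OF dy])
  qed
  have cont'': "continuous_on (cball y0 r \<times> cball x0 r) (\<lambda>(y,x). f x y)"
  proof -
    have "continuous_on (cball y0 r \<times> cball x0 r) (\<lambda>z. f (snd z) (fst z))"
      by (rule comp2[OF cont']) (auto intro!: continuous_intros)
    then show ?thesis by (simp add: case_prod_unfold)
  qed
  let ?C1 = "circlepath x0 r" and ?C2 = "circlepath y0 r"
  note K1 = KEY0[OF r cont' hx hy]
  note K2 = KEY0[of r y0 x0 "\<lambda>y x. f x y", OF r cont'' hy hx]
  define \<Phi> where "\<Phi> = (\<lambda>\<xi> \<eta>. f \<xi> \<eta> / (\<xi> - x0)^2 / (\<eta> - y0)^2)"
  have \<Phi>c: "continuous_on (path_image ?C1 \<times> path_image ?C2) (\<lambda>(\<xi>,\<eta>). \<Phi> \<xi> \<eta>)"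
  proof -
    have 1: "continuous_on (sphere x0 r \<times> sphere y0 r) (\<lambda>z. f (fst z) (snd z))"
      by (rule comp2[OF cont']) (auto intro!: continuous_intros)
    have 2: "continuous_on (sphere x0 r \<times> sphere y0 r) (\<lambda>z. (fst z - x0)^2)"
      by (intro continuous_intros)
    have 3: "\<forall>z\<in>sphere x0 r \<times> sphere y0 r. (fst z - x0)^2 \<noteq> 0" using r by auto
    have 4: "continuous_on (sphere x0 r \<times> sphere y0 r) (\<lambda>z. (snd z - y0)^2)"
      by (intro continuous_intros)
    have 5: "\<forall>z\<in>sphere x0 r \<times> sphere y0 r. (snd z - y0)^2 \<noteq> 0" using r by auto
    have "continuous_on (sphere x0 r \<times> sphere y0 r) (\<lambda>z. f (fst z) (snd z) / (fst z - x0)^2 / (snd z - y0)^2)"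
      using continuous_on_divide[OF continuous_on_divide[OF 1 2 3] 4 5] .
    moreover have "path_image ?C1 = sphere x0 r" "path_image ?C2 = sphere y0 r" using r by auto
    ultimately show ?thesis by (simp add: case_prod_unfold \<Phi>_def)
  qed
  have swap: "contour_integral ?C1 (\<lambda>\<xi>. contour_integral ?C2 (\<Phi> \<xi>)) = contour_integral ?C2 (\<lambda>\<eta>. contour_integral ?C1 (\<lambda>\<xi>. \<Phi> \<xi> \<eta>))"
    by (rule contour_integral_swap[OF \<Phi>c valid_path_circlepath valid_path_circlepath vd_circ vd_circ])
  have e1: "contour_integral ?C1 (\<lambda>\<xi>. f \<xi> \<eta> / (\<xi> - x0)^2) / cpi / (\<eta> - y0)^2 = contour_integral ?C1 (\<lambda>\<xi>. \<Phi> \<xi> \<eta>) * inverse cpi" for \<eta>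
  proof -
    have "contour_integral ?C1 (\<lambda>\<xi>. \<Phi> \<xi> \<eta>) = contour_integral ?C1 (\<lambda>\<xi>. f \<xi> \<eta> / (\<xi> - x0)^2) * inverse ((\<eta> - y0)^2)"
      unfolding \<Phi>_def divide_inverse by (rule cint_rmul)
    then show ?thesis unfolding divide_inverse by (simp add: mult_ac)
  qed
  have e2: "contour_integral ?C2 (\<lambda>\<eta>. f \<xi> \<eta> / (\<eta> - y0)^2) / cpi / (\<xi> - x0)^2 = contour_integral ?C2 (\<Phi> \<xi>) * inverse cpi" for \<xi>
  proof -
    have PhiE: "\<Phi> \<xi> = (\<lambda>\<eta>. f \<xi> \<eta> / (\<eta> - y0)^2 * inverse ((\<xi> - x0)^2))"
      by (simp add: \<Phi>_def divide_inverse mult_ac)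
    have "contour_integral ?C2 (\<Phi> \<xi>) = contour_integral ?C2 (\<lambda>\<eta>. f \<xi> \<eta> / (\<eta> - y0)^2) * inverse ((\<xi> - x0)^2)"
      unfolding PhiE by (rule cint_rmul)
    then show ?thesis unfolding divide_inverse by (simp add: mult_ac)
  qed
  have L1: "contour_integral ?C2 (\<lambda>\<eta>. contour_integral ?C1 (\<lambda>\<xi>. f \<xi> \<eta> / (\<xi> - x0)^2) / cpi / (\<eta> - y0)^2) / cpi
      = contour_integral ?C2 (\<lambda>\<eta>. contour_integral ?C1 (\<lambda>\<xi>. \<Phi> \<xi> \<eta>)) * inverse cpi * inverse cpi"
    unfolding e1 cint_rmul by (simp add: divide_inverse)
  have L2: "contour_integral ?C1 (\<lambda>\<xi>. contour_integral ?C2 (\<lambda>\<eta>. f \<xi> \<eta> / (\<eta> - y0)^2) / cpi / (\<xi> - x0)^2) / cpi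
      = contour_integral ?C1 (\<lambda>\<xi>. contour_integral ?C2 (\<Phi> \<xi>)) * inverse cpi * inverse cpi"
    unfolding e2 cint_rmul by (simp add: divide_inverse)
  have "deriv (\<lambda>x. deriv (\<lambda>y. f x y) y0) x0 =
     contour_integral ?C1 (\<lambda>\<xi>. contour_integral ?C2 (\<lambda>\<eta>. f \<xi> \<eta> / (\<eta> - y0)^2) / cpi / (\<xi> - x0)^2) / cpi"
    by (rule DERIV_imp_deriv[OF K2])
  then show ?thesis using K1 L1 L2 swap by simp
qed


type_synonym c4 = "complex \<times> complex \<times> complex \<times> complex"

definition upd :: "nat \<Rightarrow> c4 \<Rightarrow> complex \<Rightarrow> c4" where
  "upd k p x = (case p of (z,s,w,t) \<Rightarrow> if k = 0 then (x,s,w,t) else if k = 1 then (z,x,w,t)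
      else if k = 2 then (z,s,x,t) else (z,s,w,x))"

definition crd :: "nat \<Rightarrow> c4 \<Rightarrow> complex" where
  "crd k p = (case p of (z,s,w,t) \<Rightarrow> if k = 0 then z else if k = 1 then s else if k = 2 then w else t)"

definition D :: "nat \<Rightarrow> (c4 \<Rightarrow> complex) \<Rightarrow> c4 \<Rightarrow> complex" where
  "D k g p = deriv (\<lambda>x. g (upd k p x)) (crd k p)"

definition H4 :: "c4 set \<Rightarrow> (c4 \<Rightarrow> complex) \<Rightarrow> bool" where
  "H4 U g \<longleftrightarrow> open U \<and> continuous_on U g \<and>
     (\<forall>k<4. \<forall>p\<in>U. (\<lambda>x. g (upd k p x)) field_differentiable at (crd k p))"

lemma k4: "k < 4 \<Longrightarrow> k = 0 \<or> k = 1 \<or> k = 2 \<or> k = (3::nat)" by auto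

lemma crd_upd [simp]: "crd k (upd k p x) = x"
  by (cases p) (auto simp: crd_def upd_def)

lemma crd_upd_other: "i \<noteq> j \<Longrightarrow> i < 4 \<Longrightarrow> j < 4 \<Longrightarrow> crd i (upd j p x) = crd i p"
  by (cases p) (auto simp: crd_def upd_def)

lemma upd_crd [simp]: "upd k p (crd k p) = p"
  by (cases p) (auto simp: crd_def upd_def)

lemma upd_upd [simp]: "upd k (upd k p x) y = upd k p y"
  by (cases p) (auto simp: upd_def)

lemma upd_comm: "i \<noteq> j \<Longrightarrow> i < 4 \<Longrightarrow> j < 4 \<Longrightarrow> upd i (upd j p y) x = upd j (upd i p x) y"
  by (cases p) (auto simp: upd_def)

lemma upd_cont: "continuous_on UNIV (\<lambda>z::complex \<times> c4. upd k (snd z) (fst z))"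
  unfolding upd_def case_prod_unfold
  by (cases "k = 0"; cases "k = 1"; cases "k = 2") (simp_all add: continuous_on_Pair continuous_on_fst continuous_on_snd continuous_on_id)

lemma crd_cont: "continuous_on UNIV (crd k)"
  unfolding crd_def case_prod_unfold
  by (cases "k = 0"; cases "k = 1"; cases "k = 2") (simp_all add: continuous_on_fst continuous_on_snd continuous_on_id)

lemma ovim: "open S \<Longrightarrow> continuous_on UNIV f \<Longrightarrow> open (f -` S)"
  by (metis open_vimage)


lemma H4E: assumes "H4 U g" shows "open U" "continuous_on U g"
  "\<And>k p. k < 4 \<Longrightarrow> p \<in> U \<Longrightarrow> (\<lambda>x. g (upd k p x)) field_differentiable at (crd k p)"
  using assms by (auto simp: H4_def)

lemma upd_cont1: "continuous_on UNIV (\<lambda>x. upd k p x)"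
  using continuous_on_compose2[OF upd_cont, of UNIV "\<lambda>x. (x,p)" k] by (simp add: continuous_on_Pair continuous_on_const continuous_on_id)

lemma slice_open: "open U \<Longrightarrow> open {x. upd k p x \<in> U}"
  using ovim[OF _ upd_cont1, of U k p] by (simp add: vimage_def)

lemma slice_diff:
  assumes "H4 U g" "k < 4" "upd k p x \<in> U"
  shows "(\<lambda>x. g (upd k p x)) field_differentiable at x"
  using H4E(3)[OF assms(1) assms(2) assms(3)] by simp

lemma slice_hol:
  assumes "H4 U g" "k < 4"
  shows "(\<lambda>x. g (upd k p x)) holomorphic_on {x. upd k p x \<in> U}"
  unfolding holomorphic_on_def
proof
  fix x assume "x \<in> {x. upd k p x \<in> U}"
  then show "(\<lambda>x. g (upd k p x)) field_differentiable at x within {x. upd k p x \<in> U}"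
    by (intro field_differentiable_at_within[OF slice_diff[OF assms]]) simp
qed

lemma H4_D_cont:
  assumes H: "H4 U g" and k: "k < 4"
  shows "continuous_on U (D k g)"
proof -
  define V where "V = (\<lambda>z::complex \<times> c4. upd k (snd z) (fst z)) -` U"
  have oV: "open V" unfolding V_def by (rule ovim[OF H4E(1)[OF H] upd_cont])
  have cV: "continuous_on V (\<lambda>(x,q). g (upd k q x))"
  proof -
    have "continuous_on V (\<lambda>z. g (upd k (snd z) (fst z)))"
      by (rule continuous_on_compose2[OF H4E(2)[OF H] continuous_on_subset[OF upd_cont]]) (auto simp: V_def)
    then show ?thesis by (simp add: case_prod_unfold)
  qed
  have hV: "(\<lambda>x. g (upd k q x)) field_differentiable at x" if "(x,q) \<in> V" for x q
    using that by (intro slice_diff[OF H k]) (simp add: V_def)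
  have G: "continuous_on V (\<lambda>(x,q). deriv (\<lambda>x. g (upd k q x)) x)"
    by (rule GC[OF oV cV hV])
  have "continuous_on U (\<lambda>p. (\<lambda>(x,q). deriv (\<lambda>x. g (upd k q x)) x) (crd k p, p))"
  proof (rule continuous_on_compose2[OF G])
    show "continuous_on U (\<lambda>p. (crd k p, p))"
      by (intro continuous_on_Pair continuous_on_id continuous_on_subset[OF crd_cont]) simp
    show "(\<lambda>p. (crd k p, p)) ` U \<subseteq> V" by (auto simp: V_def)
  qed
  then show ?thesis by (simp add: D_def[abs_def])
qed

lemma KEY4:
  assumes H: "H4 U g" and j: "j < 4" and k: "k < 4" and jk: "j \<noteq> k" and p: "p \<in> U"
  shows "((\<lambda>y. D k g (upd j p y)) has_field_derivative D k (D j g) p) (at (crd j p))"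
proof -
  define f where "f = (\<lambda>x y. g (upd k (upd j p y) x))"
  define V where "V = (\<lambda>z::complex \<times> complex. upd k (upd j p (snd z)) (fst z)) -` U"
  have cm: "continuous_on UNIV (\<lambda>z::complex \<times> complex. upd k (upd j p (snd z)) (fst z))"
  proof -
    have "continuous_on UNIV (\<lambda>z::complex \<times> complex. (\<lambda>w. upd k (snd w) (fst w)) (fst z, upd j p (snd z)))"
      by (rule continuous_on_compose2[OF upd_cont])
         (auto intro!: continuous_on_Pair continuous_on_fst continuous_on_id continuous_on_compose2[OF upd_cont1] continuous_on_snd)
    then show ?thesis by simp
  qed
  have oV: "open V" unfolding V_def by (rule ovim[OF H4E(1)[OF H] cm])
  have cV: "continuous_on V (\<lambda>(x,y). f x y)"
  proof -
    have "continuous_on V (\<lambda>z. g (upd k (upd j p (snd z)) (fst z)))"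
      by (rule continuous_on_compose2[OF H4E(2)[OF H] continuous_on_subset[OF cm]]) (auto simp: V_def)
    then show ?thesis by (simp add: case_prod_unfold f_def)
  qed
  have dx: "(\<lambda>x. f x y) field_differentiable at x" if "(x,y) \<in> V" for x y
    using that unfolding f_def by (intro slice_diff[OF H k]) (simp add: V_def)
  have dy: "(\<lambda>y. f x y) field_differentiable at y" if "(x,y) \<in> V" for x y
  proof -
    have e: "(\<lambda>y. f x y) = (\<lambda>y. g (upd j (upd k p x) y))"
      by (simp add: f_def upd_comm[OF jk[symmetric] k j])
    have "upd j (upd k p x) y \<in> U" using that by (simp add: V_def upd_comm[OF jk[symmetric] k j])
    then show ?thesis unfolding e by (rule slice_diff[OF H j])
  qed
  have pV: "(crd k p, crd j p) \<in> V" using p by (simp add: V_def upd_comm[OF jk[symmetric] k j])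
  note K = KEY[OF oV cV dx dy pV]
  have e1: "(\<lambda>y. D k g (upd j p y)) = (\<lambda>y. deriv (\<lambda>x. f x y) (crd k p))"
    by (simp add: D_def f_def crd_upd_other[OF jk[symmetric] k j])
  have e2: "D k (D j g) p = deriv (\<lambda>x. deriv (\<lambda>y. f x y) (crd j p)) (crd k p)"
    by (simp add: D_def f_def crd_upd_other[OF jk j k] upd_comm[OF jk[symmetric] k j])
  show ?thesis unfolding e1 e2 by (rule K)
qed

lemma H4_D:
  assumes H: "H4 U g" and k: "k < 4"
  shows "H4 U (D k g)"
  unfolding H4_def
proof (intro conjI allI impI ballI)
  show "open U" by (rule H4E(1)[OF H])
  show "continuous_on U (D k g)" by (rule H4_D_cont[OF H k])
  fix j :: nat and p assume j: "j < 4" and p: "p \<in> U"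
  show "(\<lambda>x. D k g (upd j p x)) field_differentiable at (crd j p)"
  proof (cases "j = k")
    case True
    have e: "(\<lambda>x. D k g (upd j p x)) = deriv (\<lambda>x. g (upd k p x))"
      by (rule ext) (simp add: D_def True)
    have "deriv (\<lambda>x. g (upd k p x)) holomorphic_on {x. upd k p x \<in> U}"
      by (rule holomorphic_deriv[OF slice_hol[OF H k] slice_open[OF H4E(1)[OF H]]])
    then show ?thesis unfolding e
      by (rule holomorphic_on_imp_differentiable_at[OF _ slice_open[OF H4E(1)[OF H]]]) (simp add: True p)
  next
    case False
    then show ?thesis using KEY4[OF H j k False p] field_differentiable_def by blast
  qed
qed

lemma D_comm:
  assumes H: "H4 U g" and j: "j < 4" and k: "k < 4" and p: "p \<in> U"
  shows "D j (D k g) p = D k (D j g) p"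
proof (cases "j = k")
  case False
  have "D j (D k g) p = deriv (\<lambda>y. D k g (upd j p y)) (crd j p)" by (simp add: D_def)
  also have "\<dots> = D k (D j g) p" by (rule DERIV_imp_deriv[OF KEY4[OF H j k False p]])
  finally show ?thesis .
qed simp

lemma D_cong:
  assumes U: "open U" and eq: "\<And>q. q \<in> U \<Longrightarrow> g1 q = g2 q" and p: "p \<in> U"
  shows "D k g1 p = D k g2 p"
  unfolding D_def
proof (rule deriv_cong_ev[OF _ refl])
  show "\<forall>\<^sub>F x in nhds (crd k p). g1 (upd k p x) = g2 (upd k p x)"
    unfolding eventually_nhds
    by (rule exI[of _ "{x. upd k p x \<in> U}"]) (use slice_open[OF U] p eq in auto)
qed


definition unc :: "fun4 \<Rightarrow> c4 \<Rightarrow> complex" where "unc F = (\<lambda>(z,s,w,t). F z s w t)"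
definition cur :: "(c4 \<Rightarrow> complex) \<Rightarrow> fun4" where "cur g = (\<lambda>z s w t. g (z,s,w,t))"

lemma cur_unc: "cur (unc F) = F" by (simp add: cur_def unc_def)

lemma dz_cur: "dz (cur g) = cur (D 0 g)"
  by (rule ext)+ (simp add: dz_def cur_def D_def upd_def crd_def)
lemma dzeta_cur: "dzeta (cur g) = cur (D 1 g)"
  by (rule ext)+ (simp add: dzeta_def cur_def D_def upd_def crd_def)
lemma dzbar_cur: "dzbar (cur g) = cur (D 2 g)"
  by (rule ext)+ (simp add: dzbar_def cur_def D_def upd_def crd_def)
lemma dzetabar_cur: "dzetabar (cur g) = cur (D 3 g)"
  by (rule ext)+ (simp add: dzetabar_def cur_def D_def upd_def crd_def)

lemma dz_pow: "(dz ^^ n) (cur g) = cur ((D 0 ^^ n) g)" by (induction n) (simp_all add: dz_cur)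
lemma dzeta_pow: "(dzeta ^^ n) (cur g) = cur ((D 1 ^^ n) g)" by (induction n) (simp_all add: dzeta_cur)
lemma dzbar_pow: "(dzbar ^^ n) (cur g) = cur ((D 2 ^^ n) g)" by (induction n) (simp_all add: dzbar_cur)
lemma dzetabar_pow: "(dzetabar ^^ n) (cur g) = cur ((D 3 ^^ n) g)" by (induction n) (simp_all add: dzetabar_cur)

definition P4 :: "nat \<Rightarrow> nat \<Rightarrow> nat \<Rightarrow> nat \<Rightarrow> (c4 \<Rightarrow> complex) \<Rightarrow> c4 \<Rightarrow> complex" where
  "P4 a b c d g = (D 0 ^^ a) ((D 1 ^^ b) ((D 2 ^^ c) ((D 3 ^^ d) g)))"

lemma pd_eq: "pd a b c d F z s w t = P4 a b c d (unc F) (z,s,w,t)"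
proof -
  have "pd a b c d F = pd a b c d (cur (unc F))" by (simp add: cur_unc)
  also have "\<dots> = cur (P4 a b c d (unc F))"
    by (simp add: pd_def P4_def dz_pow dzeta_pow dzbar_pow dzetabar_pow)
  finally show ?thesis by (simp add: cur_def)
qed

lemma holo4_H4: "holo4 F U \<Longrightarrow> H4 U (unc F)"
  unfolding holo4_def H4_def
proof (intro conjI allI impI ballI)
  assume h: "open U \<and> continuous_on U (\<lambda>(z, s, w, t). F z s w t) \<and>
    (\<forall>(z, s, w, t)\<in>U. (\<lambda>x. F x s w t) field_differentiable at z \<and> (\<lambda>x. F z x w t) field_differentiable at s \<and>
          (\<lambda>x. F z s x t) field_differentiable at w \<and> (\<lambda>x. F z s w x) field_differentiable at t)"
  then show "open U" "continuous_on U (unc F)" by (simp_all add: unc_def)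
  fix k :: nat and p assume k: "k < 4" and p: "p \<in> U"
  obtain z s w t where pe: "p = (z,s,w,t)" by (cases p) auto
  have "(\<lambda>x. F x s w t) field_differentiable at z \<and> (\<lambda>x. F z x w t) field_differentiable at s \<and>
          (\<lambda>x. F z s x t) field_differentiable at w \<and> (\<lambda>x. F z s w x) field_differentiable at t"
    using h p pe by auto
  then show "(\<lambda>x. unc F (upd k p x)) field_differentiable at (crd k p)"
    using k4[OF k] by (auto simp: pe unc_def upd_def crd_def)
qed

lemma H4_pow: "H4 U g \<Longrightarrow> k < 4 \<Longrightarrow> H4 U ((D k ^^ n) g)"
  by (induction n) (simp_all add: H4_D)

lemma H4_P4: "H4 U g \<Longrightarrow> H4 U (P4 a b c d g)"
  unfolding P4_def by (intro H4_pow) simp_all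

lemma cong_pow:
  assumes U: "open U" and eq: "\<And>q. q \<in> U \<Longrightarrow> g1 q = g2 q" and p: "p \<in> U"
  shows "(D k ^^ n) g1 p = (D k ^^ n) g2 p"
  using p
proof (induction n arbitrary: p)
  case (Suc n) then show ?case using D_cong[OF U Suc.IH Suc.prems] by simp
qed (simp add: eq)

lemma comm_pow:
  assumes H: "H4 U h" and i: "i < 4" and j: "j < 4" and p: "p \<in> U"
  shows "D j ((D i ^^ n) h) p = (D i ^^ n) (D j h) p"
  using p
proof (induction n arbitrary: p)
  case (Suc n)
  have "D j ((D i ^^ Suc n) h) p = D j (D i ((D i ^^ n) h)) p" by simp
  also have "\<dots> = D i (D j ((D i ^^ n) h)) p" by (rule D_comm[OF H4_pow[OF H i] j i Suc.prems])
  also have "\<dots> = D i ((D i ^^ n) (D j h)) p" by (rule D_cong[OF H4E(1)[OF H] Suc.IH Suc.prems])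
  finally show ?case by simp
qed simp

definition PV :: "nat \<times> nat \<times> nat \<times> nat \<Rightarrow> (c4 \<Rightarrow> complex) \<Rightarrow> c4 \<Rightarrow> complex" where
  "PV v g = (case v of (a,b,c,d) \<Rightarrow> P4 a b c d g)"

definition sh :: "nat \<Rightarrow> nat \<times> nat \<times> nat \<times> nat \<Rightarrow> nat \<times> nat \<times> nat \<times> nat" where
  "sh k v = (case v of (a,b,c,d) \<Rightarrow> if k = 0 then (Suc a,b,c,d) else if k = 1 then (a,Suc b,c,d)
     else if k = 2 then (a,b,Suc c,d) else (a,b,c,Suc d))"

lemma H4_PV: "H4 U g \<Longrightarrow> H4 U (PV v g)"
  by (cases v) (simp add: PV_def H4_P4)

lemma sh_D:
  assumes H: "H4 U g" and k: "k < 4" and p: "p \<in> U"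
  shows "D k (PV v g) p = PV (sh k v) g p"
proof -
  obtain a b c d where v: "v = (a,b,c,d)" by (cases v) auto
  have U: "open U" by (rule H4E(1)[OF H])
  let ?Z = "(D 3 ^^ d) g" let ?Y = "(D 2 ^^ c) ?Z" let ?X = "(D 1 ^^ b) ?Y"
  have HZ: "H4 U ?Z" by (rule H4_pow[OF H]) simp
  have HY: "H4 U ?Y" by (rule H4_pow[OF HZ]) simp
  have HX: "H4 U ?X" by (rule H4_pow[OF HY]) simp
  consider "k = 0" | "k = 1" | "k = 2" | "k = 3" using k by linarith
  then show ?thesis
  proof cases
    case 1 then show ?thesis by (simp add: v PV_def sh_def P4_def)
  next
    case 2
    have "D 1 ((D 0 ^^ a) ?X) p = (D 0 ^^ a) (D 1 ?X) p" by (rule comm_pow[OF HX _ _ p]) simp_all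
    then show ?thesis by (simp add: v PV_def sh_def P4_def 2)
  next
    case 3
    have "D 2 ((D 0 ^^ a) ?X) p = (D 0 ^^ a) (D 2 ?X) p" by (rule comm_pow[OF HX _ _ p]) simp_all
    also have "\<dots> = (D 0 ^^ a) ((D 1 ^^ b) (D 2 ?Y)) p"
      by (rule cong_pow[OF U _ p], rule comm_pow[OF HY]) simp_all
    finally show ?thesis by (simp add: v PV_def sh_def P4_def 3)
  next
    case 4
    have "D 3 ((D 0 ^^ a) ?X) p = (D 0 ^^ a) (D 3 ?X) p" by (rule comm_pow[OF HX _ _ p]) simp_all
    also have "\<dots> = (D 0 ^^ a) ((D 1 ^^ b) (D 3 ?Y)) p"
      by (rule cong_pow[OF U _ p], rule comm_pow[OF HY]) simp_all
    also have "\<dots> = (D 0 ^^ a) ((D 1 ^^ b) ((D 2 ^^ c) (D 3 ?Z))) p"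
      by (rule cong_pow[OF U _ p], rule cong_pow[OF U], rule comm_pow[OF HZ]) simp_all
    finally show ?thesis by (simp add: v PV_def sh_def P4_def 4)
  qed
qed

lemma sh_pow_D:
  assumes H: "H4 U g" and k: "k < 4"
  shows "p \<in> U \<Longrightarrow> (D k ^^ m) (PV v g) p = PV ((sh k ^^ m) v) g p"
proof (induction m arbitrary: p)
  case (Suc m)
  have "(D k ^^ Suc m) (PV v g) p = D k ((D k ^^ m) (PV v g)) p" by simp
  also have "\<dots> = D k (PV ((sh k ^^ m) v) g) p" by (rule D_cong[OF H4E(1)[OF H] Suc.IH Suc.prems])
  also have "\<dots> = PV ((sh k ^^ Suc m) v) g p" using sh_D[OF H k Suc.prems] by simp
  finally show ?case .
qed simp



datatype xe = XC complex | XV "nat \<times> nat \<times> nat \<times> nat" | XI | XA xe xe | XM xe xe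

fun xev :: "(nat \<times> nat \<times> nat \<times> nat \<Rightarrow> complex) \<Rightarrow> xe \<Rightarrow> complex" where
  "xev val (XC c) = c"
| "xev val (XV v) = val v"
| "xev val XI = inverse (val (1,0,1,0))"
| "xev val (XA e1 e2) = xev val e1 + xev val e2"
| "xev val (XM e1 e2) = xev val e1 * xev val e2"

fun xvars :: "xe \<Rightarrow> (nat \<times> nat \<times> nat \<times> nat) set" where
  "xvars (XC c) = {}"
| "xvars (XV v) = {v}"
| "xvars XI = {(1,0,1,0)}"
| "xvars (XA e1 e2) = xvars e1 \<union> xvars e2"
| "xvars (XM e1 e2) = xvars e1 \<union> xvars e2"

fun der :: "nat \<Rightarrow> xe \<Rightarrow> xe" where
  "der k (XC c) = XC 0"
| "der k (XV v) = XV (sh k v)"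
| "der k XI = XM (XC (-1)) (XM (XV (sh k (1,0,1,0))) (XM XI XI))"
| "der k (XA e1 e2) = XA (der k e1) (der k e2)"
| "der k (XM e1 e2) = XA (XM (der k e1) e2) (XM e1 (der k e2))"

fun subst :: "(nat \<times> nat \<times> nat \<times> nat \<Rightarrow> xe) \<Rightarrow> xe \<Rightarrow> xe" where
  "subst \<sigma> (XC c) = XC c"
| "subst \<sigma> (XV v) = \<sigma> v"
| "subst \<sigma> XI = XI"
| "subst \<sigma> (XA e1 e2) = XA (subst \<sigma> e1) (subst \<sigma> e2)"
| "subst \<sigma> (XM e1 e2) = XM (subst \<sigma> e1) (subst \<sigma> e2)"

definition jv :: "(c4 \<Rightarrow> complex) \<Rightarrow> c4 \<Rightarrow> nat \<times> nat \<times> nat \<times> nat \<Rightarrow> complex" where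
  "jv g p = (\<lambda>v. PV v g p)"

lemma der_correct:
  assumes H: "H4 U g" and nz: "\<And>q. q \<in> U \<Longrightarrow> PV (1,0,1,0) g q \<noteq> 0" and k: "k < 4" and p: "p \<in> U"
  shows "((\<lambda>x. xev (jv g (upd k p x)) e) has_field_derivative xev (jv g p) (der k e)) (at (crd k p))"
proof (induction e)
  case (XC c) then show ?case by simp
next
  case (XV v)
  have "(\<lambda>x. PV v g (upd k p x)) field_differentiable at (crd k p)"
    by (rule H4E(3)[OF H4_PV[OF H] k p])
  then have "((\<lambda>x. PV v g (upd k p x)) has_field_derivative D k (PV v g) p) (at (crd k p))"
    unfolding D_def by (simp add: DERIV_deriv_iff_field_differentiable)
  then show ?case using sh_D[OF H k p] by (simp add: jv_def)
next
  case XI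
  have "(\<lambda>x. PV (1,0,1,0) g (upd k p x)) field_differentiable at (crd k p)"
    by (rule H4E(3)[OF H4_PV[OF H] k p])
  then have d: "((\<lambda>x. PV (1,0,1,0) g (upd k p x)) has_field_derivative PV (sh k (1,0,1,0)) g p) (at (crd k p))"
    unfolding sh_D[OF H k p, symmetric] D_def by (simp add: DERIV_deriv_iff_field_differentiable)
  have n: "PV (1,0,1,0) g (upd k p (crd k p)) \<noteq> 0" using nz[OF p] by simp
  from DERIV_inverse_fun[OF d n] show ?case
    by (simp add: jv_def power2_eq_square inverse_mult_distrib)
next
  case (XA e1 e2) then show ?case by (simp add: DERIV_add)
next
  case (XM e1 e2)
  from DERIV_mult[OF XM.IH(1) XM.IH(2)] show ?case by (simp add: ac_simps)
qed

lemma der_on_U: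
  assumes H: "H4 U g" and nz: "\<And>q. q \<in> U \<Longrightarrow> PV (1,0,1,0) g q \<noteq> 0" and k: "k < 4"
    and eq: "\<And>q. q \<in> U \<Longrightarrow> h q = xev (jv g q) e" and p: "p \<in> U"
  shows "D k h p = xev (jv g p) (der k e)"
proof -
  have "D k h p = D k (\<lambda>q. xev (jv g q) e) p" by (rule D_cong[OF H4E(1)[OF H] eq p])
  also have "\<dots> = xev (jv g p) (der k e)"
    unfolding D_def by (rule DERIV_imp_deriv[OF der_correct[OF H nz k p]])
  finally show ?thesis .
qed

lemma der_pow_on_U:
  assumes H: "H4 U g" and nz: "\<And>q. q \<in> U \<Longrightarrow> PV (1,0,1,0) g q \<noteq> 0" and k: "k < 4"
    and eq: "\<And>q. q \<in> U \<Longrightarrow> h q = xev (jv g q) e"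
  shows "p \<in> U \<Longrightarrow> (D k ^^ m) h p = xev (jv g p) ((der k ^^ m) e)"
proof (induction m arbitrary: p)
  case 0 then show ?case by (simp add: eq)
next
  case (Suc m)
  show ?case using der_on_U[OF H nz k Suc.IH Suc.prems] by simp
qed

definition ord :: "nat \<times> nat \<times> nat \<times> nat \<Rightarrow> nat" where
  "ord v = (case v of (a,b,c,d) \<Rightarrow> a + b + c + d)"

lemma ord_sh [simp]: "ord (sh k v) = Suc (ord v)"
  by (cases v) (auto simp: ord_def sh_def)

lemma der_vars:
  assumes Q: "\<And>v. Q v \<Longrightarrow> Q (sh k v)" "Q (1,0,1,0)" "Q (sh k (1,0,1,0))" and m: "2 \<le> m"
  shows "xvars e \<subseteq> {v. ord v \<le> m \<and> Q v} \<Longrightarrow> xvars (der k e) \<subseteq> {v. ord v \<le> Suc m \<and> Q v}"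
proof (induction e)
  case XI
  have o1: "ord (1,0,1,0) = 2" by (simp add: ord_def)
  have o2: "ord (sh k (1,0,1,0)) = 3" unfolding ord_sh o1 by simp
  show ?case using Q m o1 o2 by auto
qed (use Q in auto)

lemma der_pow_vars:
  assumes Q: "\<And>v. Q v \<Longrightarrow> Q (sh k v)" "Q (1,0,1,0)" "Q (sh k (1,0,1,0))" and mge: "2 \<le> m"
  shows "xvars e \<subseteq> {v. ord v \<le> m \<and> Q v} \<Longrightarrow> xvars ((der k ^^ j) e) \<subseteq> {v. ord v \<le> m + j \<and> Q v}"
proof (induction j)
  case (Suc j)
  have mj: "2 \<le> m + j" using mge by simp
  have "xvars (der k ((der k ^^ j) e)) \<subseteq> {v. ord v \<le> Suc (m + j) \<and> Q v}"
    by (rule der_vars[OF Q mj Suc.IH[OF Suc.prems]])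
  then show ?case by simp
qed simp

lemma subst_xev:
  "(\<And>w. w \<in> xvars e \<Longrightarrow> val w = xev val (\<sigma> w)) \<Longrightarrow> xev val (subst \<sigma> e) = xev val e"
  by (induction e) auto

lemma subst_vars: "xvars (subst \<sigma> e) \<subseteq> (\<Union>w\<in>xvars e. xvars (\<sigma> w)) \<union> {(1,0,1,0)}"
  by (induction e) auto

lemma sh1_pow: "(sh 1 ^^ m) (a,b,c,d) = (a, b + m, c, d)"
  by (induction m) (auto simp: sh_def)
lemma sh3_pow: "(sh 3 ^^ m) (a,b,c,d) = (a, b, c, d + m)"
  by (induction m) (auto simp: sh_def)



definition cond :: "c4 set \<Rightarrow> (c4 \<Rightarrow> complex) \<Rightarrow> bool" where
  "cond U g \<longleftrightarrow> H4 U g \<and> (\<forall>q\<in>U. PV (1,0,1,0) g q \<noteq> 0) \<and>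
     (\<forall>q\<in>U. PV (1,0,1,0) g q * PV (0,1,0,1) g q - PV (0,1,1,0) g q * PV (1,0,0,1) g q = 0)"

definition rep :: "nat \<times> nat \<times> nat \<times> nat \<Rightarrow> xe \<Rightarrow> bool" where
  "rep v e \<longleftrightarrow> (\<forall>U g. cond U g \<longrightarrow> (\<forall>p\<in>U. PV v g p = xev (jv g p) e))"

definition Qbd :: "nat \<times> nat \<times> nat \<times> nat \<Rightarrow> bool" where
  "Qbd v = (case v of (a,b,c,d) \<Rightarrow> b = 0 \<or> d = 0)"

definition OK :: "nat \<Rightarrow> (nat \<times> nat \<times> nat \<times> nat) set" where
  "OK n = {v. ord v \<le> n \<and> Qbd v}"

definition GOOD :: "nat \<times> nat \<times> nat \<times> nat \<Rightarrow> bool" where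
  "GOOD v \<longleftrightarrow> (\<exists>e. xvars e \<subseteq> OK (ord v) \<and> rep v e)"

lemma OK_mono: "m \<le> n \<Longrightarrow> OK m \<subseteq> OK n" by (auto simp: OK_def)

lemma step_der:
  assumes G: "GOOD v'" and k: "k < 4" and Qk: "\<And>v. Qbd v \<Longrightarrow> Qbd (sh k v)" and Q1: "Qbd (sh k (1,0,1,0))"
    and o: "2 \<le> ord v'"
  shows "GOOD (sh k v')"
proof -
  obtain e' where e': "xvars e' \<subseteq> OK (ord v')" "rep v' e'" using G by (auto simp: GOOD_def)
  have Q0: "Qbd (1,0,1,0)" by (simp add: Qbd_def)
  have "xvars (der k e') \<subseteq> {v. ord v \<le> Suc (ord v') \<and> Qbd v}"
    by (rule der_vars[OF Qk Q0 Q1 o e'(1)[unfolded OK_def]])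
  then have V: "xvars (der k e') \<subseteq> OK (ord (sh k v'))" by (simp add: OK_def)
  have R: "rep (sh k v') (der k e')"
    unfolding rep_def
  proof (intro allI impI ballI)
    fix U g p assume c: "cond U g" and p: "p \<in> U"
    have H: "H4 U g" and nz: "\<And>q. q \<in> U \<Longrightarrow> PV (1,0,1,0) g q \<noteq> 0" using c by (auto simp: cond_def)
    have eq: "\<And>q. q \<in> U \<Longrightarrow> PV v' g q = xev (jv g q) e'" using e'(2) c by (auto simp: rep_def)
    have "PV (sh k v') g p = D k (PV v' g) p" by (rule sh_D[OF H k p, symmetric])
    also have "\<dots> = xev (jv g p) (der k e')" by (rule der_on_U[OF H nz k eq p])
    finally show "PV (sh k v') g p = xev (jv g p) (der k e')" .
  qed
  show ?thesis using V R unfolding GOOD_def by blast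
qed

lemma main: "\<forall>v. ord v = n \<longrightarrow> GOOD v"
proof (induction n rule: less_induct)
  case (less n)
  have AC: "GOOD v" if o: "ord v = n" and h: "Qbd v \<or> 1 \<le> fst v \<or> 1 \<le> fst (snd (snd v))" for v
  proof -
    obtain a b c d where v: "v = (a,b,c,d)" by (cases v) auto
    show ?thesis
    proof (cases "Qbd v")
      case True
      have "xvars (XV v) \<subseteq> OK (ord v)" using True by (simp add: OK_def)
      moreover have "rep v (XV v)" by (simp add: rep_def jv_def)
      ultimately show ?thesis unfolding GOOD_def by blast
    next
      case False
      then have bd: "1 \<le> b" "1 \<le> d" by (auto simp: v Qbd_def)
      show ?thesis
      proof (cases "1 \<le> a")
        case True
        define v' where "v' = (a - 1, b, c, d)"
        have sv: "sh 0 v' = v" using True by (simp add: v v'_def sh_def)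
        have ov: "ord v' < n" "2 \<le> ord v'" using True bd o by (auto simp: v v'_def ord_def)
        have "GOOD v'" using less.IH[OF ov(1)] by blast
        from step_der[OF this _ _ _ ov(2), of 0] show ?thesis
          unfolding sv by (auto simp: Qbd_def sh_def)
      next
        case False
        then have c1: "1 \<le> c" using h \<open>\<not> Qbd v\<close> by (auto simp: v)
        define v' where "v' = (a, b, c - 1, d)"
        have sv: "sh 2 v' = v" using c1 by (simp add: v v'_def sh_def)
        have ov: "ord v' < n" "2 \<le> ord v'" using c1 bd o by (auto simp: v v'_def ord_def)
        have "GOOD v'" using less.IH[OF ov(1)] by blast
        from step_der[OF this _ _ _ ov(2), of 2] show ?thesis
          unfolding sv by (auto simp: Qbd_def sh_def)
      qed
    qed
  qed
  show ?case
  proof (intro allI impI)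
    fix v assume o: "ord v = n"
    obtain a b c d where v: "v = (a,b,c,d)" by (cases v) auto
    show "GOOD v"
    proof (cases "Qbd v \<or> 1 \<le> fst v \<or> 1 \<le> fst (snd (snd v))")
      case True then show ?thesis by (rule AC[OF o])
    next
      case False
      then have z: "a = 0" "c = 0" "1 \<le> b" "1 \<le> d" by (auto simp: v Qbd_def)
      have n2: "2 \<le> n" using o z by (simp add: v ord_def)
      define e0 where "e0 = XM (XV (0,1,1,0)) (XM (XV (1,0,0,1)) XI)"
      define E3 where "E3 = (der 3 ^^ (d - 1)) e0"
      define E where "E = (der 1 ^^ (b - 1)) E3"
      define R where "R = (\<lambda>v::nat \<times> nat \<times> nat \<times> nat. case v of (a,b,c,d) \<Rightarrow> 1 \<le> a + c)"
      have Rsh: "\<And>v k. R v \<Longrightarrow> R (sh k v)" by (auto simp: R_def sh_def split: if_splits)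
      have R1: "R (1,0,1,0)" "\<And>k. R (sh k (1,0,1,0))" by (auto simp: R_def sh_def)
      have V0: "xvars e0 \<subseteq> {v. ord v \<le> 2 \<and> R v}" by (auto simp: e0_def ord_def R_def)
      have V3: "xvars E3 \<subseteq> {v. ord v \<le> 2 + (d - 1) \<and> R v}"
        unfolding E3_def by (rule der_pow_vars[where Q=R and k=3 and m=2, OF Rsh R1(1) R1(2) order.refl V0])
      have "xvars E \<subseteq> {v. ord v \<le> 2 + (d - 1) + (b - 1) \<and> R v}"
        unfolding E_def by (rule der_pow_vars[where Q=R and k=1 and m="2 + (d - 1)", OF Rsh R1(1) R1(2) le_add1 V3])
      moreover have "2 + (d - 1) + (b - 1) = n" using o z by (simp add: v ord_def)
      ultimately have VE: "xvars E \<subseteq> {v. ord v \<le> n \<and> R v}" by simp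
      have GW: "GOOD w" if "w \<in> xvars E" for w
      proof (cases "ord w < n")
        case True then show ?thesis using less.IH by blast
      next
        case False
        then have "ord w = n" "R w" using VE that by auto
        then show ?thesis by (intro AC) (auto simp: R_def split: prod.splits)
      qed
      define \<sigma> where "\<sigma> = (\<lambda>w. SOME e. xvars e \<subseteq> OK (ord w) \<and> rep w e)"
      have \<sigma>: "xvars (\<sigma> w) \<subseteq> OK (ord w) \<and> rep w (\<sigma> w)" if "w \<in> xvars E" for w
        unfolding \<sigma>_def by (rule someI_ex) (use GW[OF that] in \<open>simp add: GOOD_def\<close>)
      have Vs: "xvars (subst \<sigma> E) \<subseteq> OK n"
      proof -
        have "(\<Union>w\<in>xvars E. xvars (\<sigma> w)) \<subseteq> OK n"
        proof (rule UN_least)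
          fix w assume w: "w \<in> xvars E"
          then have "ord w \<le> n" using VE by auto
          then show "xvars (\<sigma> w) \<subseteq> OK n" using \<sigma>[OF w] OK_mono by blast
        qed
        moreover have "(1,0,1,0) \<in> OK n" using n2 by (simp add: OK_def ord_def Qbd_def)
        ultimately show ?thesis using subst_vars[of \<sigma> E] by blast
      qed
      have Rp: "rep v (subst \<sigma> E)"
        unfolding rep_def
      proof (intro allI impI ballI)
        fix U g p assume c: "cond U g" and p: "p \<in> U"
        have H: "H4 U g" and nz: "\<And>q. q \<in> U \<Longrightarrow> PV (1,0,1,0) g q \<noteq> 0"
          and rel: "\<And>q. q \<in> U \<Longrightarrow> PV (1,0,1,0) g q * PV (0,1,0,1) g q - PV (0,1,1,0) g q * PV (1,0,0,1) g q = 0"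
          using c by (auto simp: cond_def)
        have h0: "PV (0,1,0,1) g q = xev (jv g q) e0" if q: "q \<in> U" for q
        proof -
          have "PV (1,0,1,0) g q * PV (0,1,0,1) g q = PV (0,1,1,0) g q * PV (1,0,0,1) g q"
            using rel[OF q] by simp
          then show ?thesis using nz[OF q] by (simp add: e0_def jv_def field_simps)
        qed
        have h3: "PV (0,1,0,d) g q = xev (jv g q) E3" if q: "q \<in> U" for q
        proof -
          have "(D 3 ^^ (d - 1)) (PV (0,1,0,1) g) q = xev (jv g q) E3"
            unfolding E3_def by (rule der_pow_on_U[OF H nz _ h0 q]) simp_all
          moreover have "(D 3 ^^ (d - 1)) (PV (0,1,0,1) g) q = PV (0,1,0,d) g q"
            using sh_pow_D[OF H _ q, of 3 "d - 1" "(0,1,0,1)"] z by (simp add: sh3_pow)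
          ultimately show ?thesis by simp
        qed
        have "(D 1 ^^ (b - 1)) (PV (0,1,0,d) g) p = xev (jv g p) E"
          unfolding E_def by (rule der_pow_on_U[OF H nz _ h3 p]) simp_all
        moreover have "(D 1 ^^ (b - 1)) (PV (0,1,0,d) g) p = PV v g p"
          using sh_pow_D[OF H _ p, of 1 "b - 1" "(0,1,0,d)"] z unfolding sh1_pow by (simp add: v)
        moreover have "xev (jv g p) (subst \<sigma> E) = xev (jv g p) E"
        proof (rule subst_xev)
          fix w assume w: "w \<in> xvars E"
          then have "rep w (\<sigma> w)" using \<sigma> by blast
          then show "jv g p w = xev (jv g p) (\<sigma> w)" using c p by (simp add: rep_def jv_def)
        qed
        ultimately show "PV v g p = xev (jv g p) (subst \<sigma> E)" by simp
      qed
      show ?thesis using Vs Rp o unfolding GOOD_def by blast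
    qed
  qed
qed

fun gp :: "nat \<Rightarrow> pexpr" where
  "gp 0 = PConst 1"
| "gp (Suc k) = PMul (PVar (VB 1 0 1)) (gp k)"

lemma gp_eval: "peval j (gp k) = j (VB 1 0 1) ^ k" by (induction k) auto
lemma gp_vars: "pvars (gp k) \<subseteq> {VB 1 0 1}" by (induction k) auto

definition tr :: "nat \<times> nat \<times> nat \<times> nat \<Rightarrow> dvar" where
  "tr v = (case v of (a,b,c,d) \<Rightarrow> if d = 0 then VB a b c else VC a c d)"

lemma conv: "\<exists>P N. pvars P \<subseteq> tr ` xvars e \<union> {VB 1 0 1} \<and>
  (\<forall>val j. (\<forall>w\<in>xvars e. j (tr w) = val w) \<longrightarrow> j (VB 1 0 1) = val (1,0,1,0) \<longrightarrow> val (1,0,1,0) \<noteq> 0 \<longrightarrow>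
     xev val e = peval j P / val (1,0,1,0) ^ N)"
proof (induction e)
  case (XC c) show ?case by (rule exI[of _ "PConst c"], rule exI[of _ 0]) simp_all
next
  case (XV v) show ?case by (rule exI[of _ "PVar (tr v)"], rule exI[of _ 0]) simp_all
next
  case XI show ?case by (rule exI[of _ "PConst 1"], rule exI[of _ 1]) (simp add: divide_inverse)
next
  case (XA e1 e2)
  obtain P1 N1 where 1: "pvars P1 \<subseteq> tr ` xvars e1 \<union> {VB 1 0 1}"
    "\<And>val j. (\<forall>w\<in>xvars e1. j (tr w) = val w) \<Longrightarrow> j (VB 1 0 1) = val (1,0,1,0) \<Longrightarrow> val (1,0,1,0) \<noteq> 0 \<Longrightarrow>
     xev val e1 = peval j P1 / val (1,0,1,0) ^ N1" using XA.IH(1) by blast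
  obtain P2 N2 where 2: "pvars P2 \<subseteq> tr ` xvars e2 \<union> {VB 1 0 1}"
    "\<And>val j. (\<forall>w\<in>xvars e2. j (tr w) = val w) \<Longrightarrow> j (VB 1 0 1) = val (1,0,1,0) \<Longrightarrow> val (1,0,1,0) \<noteq> 0 \<Longrightarrow>
     xev val e2 = peval j P2 / val (1,0,1,0) ^ N2" using XA.IH(2) by blast
  show ?case
  proof (rule exI[of _ "PAdd (PMul P1 (gp N2)) (PMul P2 (gp N1))"], rule exI[of _ "N1 + N2"], intro conjI allI impI)
    show "pvars (PAdd (PMul P1 (gp N2)) (PMul P2 (gp N1))) \<subseteq> tr ` xvars (XA e1 e2) \<union> {VB 1 0 1}"
      using 1(1) 2(1) gp_vars[of N1] gp_vars[of N2] by auto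
    fix val :: "nat \<times> nat \<times> nat \<times> nat \<Rightarrow> complex" and j :: "dvar \<Rightarrow> complex" assume a: "\<forall>w\<in>xvars (XA e1 e2). j (tr w) = val w" "j (VB 1 0 1) = val (1,0,1,0)" "val (1,0,1,0) \<noteq> 0"
    have x1: "xev val e1 = peval j P1 / val (1,0,1,0) ^ N1" using 1(2)[of j val] a by auto
    have x2: "xev val e2 = peval j P2 / val (1,0,1,0) ^ N2" using 2(2)[of j val] a by auto
    show "xev val (XA e1 e2) = peval j (PAdd (PMul P1 (gp N2)) (PMul P2 (gp N1))) / val (1,0,1,0) ^ (N1 + N2)"
      using a(3) unfolding xev.simps peval.simps x1 x2 gp_eval a(2) by (simp add: power_add field_simps)
  qed
next
  case (XM e1 e2)
  obtain P1 N1 where 1: "pvars P1 \<subseteq> tr ` xvars e1 \<union> {VB 1 0 1}"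
    "\<And>val j. (\<forall>w\<in>xvars e1. j (tr w) = val w) \<Longrightarrow> j (VB 1 0 1) = val (1,0,1,0) \<Longrightarrow> val (1,0,1,0) \<noteq> 0 \<Longrightarrow>
     xev val e1 = peval j P1 / val (1,0,1,0) ^ N1" using XM.IH(1) by blast
  obtain P2 N2 where 2: "pvars P2 \<subseteq> tr ` xvars e2 \<union> {VB 1 0 1}"
    "\<And>val j. (\<forall>w\<in>xvars e2. j (tr w) = val w) \<Longrightarrow> j (VB 1 0 1) = val (1,0,1,0) \<Longrightarrow> val (1,0,1,0) \<noteq> 0 \<Longrightarrow>
     xev val e2 = peval j P2 / val (1,0,1,0) ^ N2" using XM.IH(2) by blast
  show ?case
  proof (rule exI[of _ "PMul P1 P2"], rule exI[of _ "N1 + N2"], intro conjI allI impI)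
    show "pvars (PMul P1 P2) \<subseteq> tr ` xvars (XM e1 e2) \<union> {VB 1 0 1}"
      using 1(1) 2(1) by auto
    fix val :: "nat \<times> nat \<times> nat \<times> nat \<Rightarrow> complex" and j :: "dvar \<Rightarrow> complex" assume a: "\<forall>w\<in>xvars (XM e1 e2). j (tr w) = val w" "j (VB 1 0 1) = val (1,0,1,0)" "val (1,0,1,0) \<noteq> 0"
    have x1: "xev val e1 = peval j P1 / val (1,0,1,0) ^ N1" using 1(2)[of j val] a by auto
    have x2: "xev val e2 = peval j P2 / val (1,0,1,0) ^ N2" using 2(2)[of j val] a by auto
    show "xev val (XM e1 e2) = peval j (PMul P1 P2) / val (1,0,1,0) ^ (N1 + N2)"
      using a(3) by (simp add: x1 x2 power_add)
  qed
qed

lemma tr_allowed: "v \<in> OK n \<Longrightarrow> tr v \<in> allowed_vars n"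
  by (cases v) (auto simp: OK_def ord_def Qbd_def tr_def allowed_vars_def)

lemma jet_tr: "Qbd w \<Longrightarrow> jet F z s x t (tr w) = PV w (unc F) (z,s,x,t)"
  by (cases w) (auto simp: Qbd_def tr_def PV_def pd_eq)



theorem lemma7p1:
  fixes a b c d :: nat
  assumes "b \<ge> 1" and "d \<ge> 1"
  shows "\<exists>(P::pexpr) (N::nat). N \<ge> 1 \<and> pvars P \<subseteq> allowed_vars (a + b + c + d) \<and>
    (\<forall>(F::fun4) U. (0, 0, 0, 0) \<in> U \<and> holo4 F U \<and>
       (\<forall>(z,s,w,t)\<in>U. pd 1 0 1 0 F z s w t \<noteq> 0) \<and>
       (\<forall>(z,s,w,t)\<in>U. pd 1 0 1 0 F z s w t * pd 0 1 0 1 F z s w t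
                        - pd 0 1 1 0 F z s w t * pd 1 0 0 1 F z s w t = 0)
     \<longrightarrow> (\<forall>(z,s,w,t)\<in>U. pd a b c d F z s w t
                        = peval (jet F z s w t) P / (pd 1 0 1 0 F z s w t) ^ N))"
proof -
  define n where "n = a + b + c + d"
  have n2: "2 \<le> n" using assms by (simp add: n_def)
  have "GOOD (a,b,c,d)" using main[of "ord (a,b,c,d)"] by blast
  then obtain e where e: "xvars e \<subseteq> OK n" "rep (a,b,c,d) e" by (auto simp: GOOD_def ord_def n_def)
  obtain P N where PN: "pvars P \<subseteq> tr ` xvars e \<union> {VB 1 0 1}"
    and PNv: "\<And>val j. (\<forall>w\<in>xvars e. j (tr w) = val w) \<Longrightarrow> j (VB 1 0 1) = val (1,0,1,0) \<Longrightarrow> val (1,0,1,0) \<noteq> 0 \<Longrightarrow>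
        xev val e = peval j P / val (1,0,1,0) ^ N"
    using conv[of e] by blast
  have pvg: "PV (a',b',c',d') (unc F) (z,s,x,t) = pd a' b' c' d' F z s x t" for a' b' c' d' F z s x t
    by (simp add: PV_def pd_eq)
  show ?thesis
  proof (rule exI[of _ "PMul P (PVar (VB 1 0 1))"], rule exI[of _ "Suc N"], intro conjI allI impI)
    show "1 \<le> Suc N" by simp
    have "tr ` xvars e \<subseteq> allowed_vars n" using e(1) tr_allowed by blast
    moreover have "VB 1 0 1 \<in> allowed_vars n" using n2 by (auto simp: allowed_vars_def)
    ultimately have "pvars P \<subseteq> allowed_vars n" "VB 1 0 1 \<in> allowed_vars n" using PN by blast+
    then show "pvars (PMul P (PVar (VB 1 0 1))) \<subseteq> allowed_vars (a + b + c + d)"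
      unfolding n_def by simp
    fix F U
    assume h: "(0, 0, 0, 0) \<in> U \<and> holo4 F U \<and>
       (\<forall>(z,s,w,t)\<in>U. pd 1 0 1 0 F z s w t \<noteq> 0) \<and>
       (\<forall>(z,s,w,t)\<in>U. pd 1 0 1 0 F z s w t * pd 0 1 0 1 F z s w t
                        - pd 0 1 1 0 F z s w t * pd 1 0 0 1 F z s w t = 0)"
    have cnd: "cond U (unc F)"
      unfolding cond_def
    proof (intro conjI ballI)
      show "H4 U (unc F)" using h holo4_H4 by blast
      fix q assume q: "q \<in> U"
      obtain z s x t where qe: "q = (z,s,x,t)" by (cases q) auto
      have "pd 1 0 1 0 F z s x t \<noteq> 0" using h q qe by auto
      then show "PV (1,0,1,0) (unc F) q \<noteq> 0" unfolding qe pvg .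
      have "pd 1 0 1 0 F z s x t * pd 0 1 0 1 F z s x t - pd 0 1 1 0 F z s x t * pd 1 0 0 1 F z s x t = 0"
        using h q qe by auto
      then show "PV (1,0,1,0) (unc F) q * PV (0,1,0,1) (unc F) q - PV (0,1,1,0) (unc F) q * PV (1,0,0,1) (unc F) q = 0"
        unfolding qe pvg .
    qed
    show "\<forall>(z,s,w,t)\<in>U. pd a b c d F z s w t
          = peval (jet F z s w t) (PMul P (PVar (VB 1 0 1))) / (pd 1 0 1 0 F z s w t) ^ Suc N"
    proof (intro ballI)
      fix q assume q: "q \<in> U"
      obtain z s x t where qe: "q = (z,s,x,t)" by (cases q) auto
      have G: "pd 1 0 1 0 F z s x t \<noteq> 0" using h q qe by auto
      have "pd a b c d F z s x t = PV (a,b,c,d) (unc F) q" unfolding qe pvg ..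
      also have "\<dots> = xev (jv (unc F) q) e" using e(2) cnd q by (simp add: rep_def)
      also have "\<dots> = peval (jet F z s x t) P / (jv (unc F) q) (1,0,1,0) ^ N"
      proof (rule PNv)
        show "\<forall>w\<in>xvars e. jet F z s x t (tr w) = jv (unc F) q w"
        proof
          fix w assume "w \<in> xvars e"
          then have "Qbd w" using e(1) by (auto simp: OK_def)
          then show "jet F z s x t (tr w) = jv (unc F) q w" by (simp add: jet_tr jv_def qe)
        qed
        show "jet F z s x t (VB 1 0 1) = jv (unc F) q (1,0,1,0)" unfolding jv_def qe pvg by simp
        show "jv (unc F) q (1,0,1,0) \<noteq> 0" using G unfolding jv_def qe pvg .
      qed
      also have "\<dots> = peval (jet F z s x t) P / (pd 1 0 1 0 F z s x t) ^ N" unfolding jv_def qe pvg ..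
      also have "\<dots> = peval (jet F z s x t) (PMul P (PVar (VB 1 0 1))) / (pd 1 0 1 0 F z s x t) ^ Suc N"
        using G by simp
      finally show "case q of (z,s,w,t) \<Rightarrow> pd a b c d F z s w t
          = peval (jet F z s w t) (PMul P (PVar (VB 1 0 1))) / (pd 1 0 1 0 F z s w t) ^ Suc N"
        by (simp add: qe)
    qed
  qed
qed


end
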